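(* Let $T$ be a tree. Then for every dominating set $S$ of $T$, $|a(S)|\le 2\Gamma(T)-|S|$.
   Context: A dominating set of a graph $G=(V,E)$ is a set $S\subseteq V$ such that every vertex is in $S$ or adjacent to a vertex of $S$; it is minimal if no proper subset is dominating. $\Gamma(T)$ is the maximum size of a minimal dominating set of $T$. For a dominating set $S$, $a(S)=\{v\in S: S\setminus\{v\}\text{ is not a dominating set}\}$. *)

theory Defs
  imports Main
begin

definition simple_graph :: "'a set \<Rightarrow> 'a set set \<Rightarrow> bool" where
  "simple_graph V E \<longleftrightarrow> finite V \<and> (\<forall>e\<in>E. e \<subseteq> V \<and> card e = 2)"

definition adj :: "'a set set \<Rightarrow> 'a \<Rightarrow> 'a \<Rightarrow> bool" where
  "adj E u v \<longleftrightarrow> {u, v} \<in> E"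

definition is_walk :: "'a set \<Rightarrow> 'a set set \<Rightarrow> 'a list \<Rightarrow> bool" where
  "is_walk V E p \<longleftrightarrow> p \<noteq> [] \<and> set p \<subseteq> V \<and> (\<forall>i. Suc i < length p \<longrightarrow> adj E (p ! i) (p ! Suc i))"

definition connected_graph :: "'a set \<Rightarrow> 'a set set \<Rightarrow> bool" where
  "connected_graph V E \<longleftrightarrow>
     (\<forall>u\<in>V. \<forall>v\<in>V. \<exists>p. is_walk V E p \<and> hd p = u \<and> last p = v)"

definition is_cycle :: "'a set \<Rightarrow> 'a set set \<Rightarrow> 'a list \<Rightarrow> bool" where
  "is_cycle V E c \<longleftrightarrow> length c \<ge> 3 \<and> distinct c \<and> is_walk V E c \<and> adj E (last c) (hd c)"

definition is_tree :: "'a set \<Rightarrow> 'a set set \<Rightarrow> bool" where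
  "is_tree V E \<longleftrightarrow> simple_graph V E \<and> V \<noteq> {} \<and> connected_graph V E \<and> (\<nexists>c. is_cycle V E c)"

definition dominating :: "'a set \<Rightarrow> 'a set set \<Rightarrow> 'a set \<Rightarrow> bool" where
  "dominating V E S \<longleftrightarrow> S \<subseteq> V \<and> (\<forall>v\<in>V. v \<in> S \<or> (\<exists>u\<in>S. adj E u v))"

definition minimal_dominating :: "'a set \<Rightarrow> 'a set set \<Rightarrow> 'a set \<Rightarrow> bool" where
  "minimal_dominating V E S \<longleftrightarrow> dominating V E S \<and> (\<forall>S'. S' \<subset> S \<longrightarrow> \<not> dominating V E S')"

definition upper_domination :: "'a set \<Rightarrow> 'a set set \<Rightarrow> nat" where
  "upper_domination V E = Max (card ` {S. minimal_dominating V E S})"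

definition essential_set :: "'a set \<Rightarrow> 'a set set \<Rightarrow> 'a set \<Rightarrow> 'a set" where
  "essential_set V E S = {v\<in>S. \<not> dominating V E (S - {v})}"

end

theory Submission
  imports Defs
begin

lemma adj_sym: "adj E u v = adj E v u"
  by (simp add: adj_def insert_commute)

lemma adj_props:
  assumes "simple_graph V E" "adj E u v"
  shows "u \<noteq> v" "u \<in> V" "v \<in> V"
proof -
  have "{u,v} \<in> E" using assms(2) by (simp add: adj_def)
  then have "{u,v} \<subseteq> V" "card {u,v} = 2" using assms(1) by (auto simp: simple_graph_def)
  then show "u \<noteq> v" "u \<in> V" "v \<in> V" by auto
qed

lemma walk_single: "is_walk V E [x] \<longleftrightarrow> x \<in> V"
  by (simp add: is_walk_def)

lemma walk_Cons2: "is_walk V E (x#y#xs) \<longleftrightarrow> x \<in> V \<and> adj E x y \<and> is_walk V E (y#xs)"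
proof
  assume h: "is_walk V E (x#y#xs)"
  have "adj E x y" using h unfolding is_walk_def by (metis Suc_less_eq length_Cons nth_Cons_0 nth_Cons_Suc zero_less_Suc)
  moreover have "\<forall>i. Suc i < length (y#xs) \<longrightarrow> adj E ((y#xs) ! i) ((y#xs) ! Suc i)"
  proof (intro allI impI)
    fix i assume "Suc i < length (y#xs)"
    then have "Suc (Suc i) < length (x#y#xs)" by simp
    then have "adj E ((x#y#xs) ! Suc i) ((x#y#xs) ! Suc (Suc i))" using h unfolding is_walk_def by blast
    then show "adj E ((y#xs) ! i) ((y#xs) ! Suc i)" by simp
  qed
  ultimately show "x \<in> V \<and> adj E x y \<and> is_walk V E (y#xs)" using h unfolding is_walk_def by auto
next
  assume h: "x \<in> V \<and> adj E x y \<and> is_walk V E (y#xs)"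
  have "\<forall>i. Suc i < length (x#y#xs) \<longrightarrow> adj E ((x#y#xs) ! i) ((x#y#xs) ! Suc i)"
  proof (intro allI impI)
    fix i assume i: "Suc i < length (x#y#xs)"
    show "adj E ((x#y#xs) ! i) ((x#y#xs) ! Suc i)"
    proof (cases i)
      case 0 then show ?thesis using h by simp
    next
      case (Suc j)
      then have "Suc j < length (y#xs)" using i by simp
      then have "adj E ((y#xs) ! j) ((y#xs) ! Suc j)" using h unfolding is_walk_def by blast
      then show ?thesis using Suc by simp
    qed
  qed
  then show "is_walk V E (x#y#xs)" using h unfolding is_walk_def by auto
qed

lemma walk_append:
  "p \<noteq> [] \<Longrightarrow> q \<noteq> [] \<Longrightarrow> is_walk V E (p @ q) \<longleftrightarrow> is_walk V E p \<and> is_walk V E q \<and> adj E (last p) (hd q)"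
proof (induction p)
  case Nil then show ?case by simp
next
  case (Cons x p)
  show ?case
  proof (cases p)
    case Nil
    then obtain y q' where q: "q = y # q'" using Cons.prems by (cases q) auto
    show ?thesis using Nil q by (auto simp: walk_Cons2 walk_single)
  next
    case (Cons y p')
    have "is_walk V E ((x#p) @ q) \<longleftrightarrow> x \<in> V \<and> adj E x y \<and> is_walk V E (p @ q)"
      using Cons by (simp add: walk_Cons2)
    also have "\<dots> \<longleftrightarrow> x \<in> V \<and> adj E x y \<and> is_walk V E p \<and> is_walk V E q \<and> adj E (last p) (hd q)"
      using Cons.IH Cons.prems Cons by simp
    finally show ?thesis using Cons by (simp add: walk_Cons2)
  qed
qed

lemma walk_hd: "is_walk V E (a # q) \<Longrightarrow> a \<in> V"
  by (simp add: is_walk_def)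

lemma walk_split: "is_walk V E (p @ a # q) \<longleftrightarrow> is_walk V E (p @ [a]) \<and> is_walk V E (a # q)"
proof (cases "p = []")
  case True
  then show ?thesis using walk_hd[of V E a q] by (auto simp: walk_single)
next
  case False
  have 1: "is_walk V E (p @ a # q) \<longleftrightarrow> is_walk V E p \<and> is_walk V E (a # q) \<and> adj E (last p) a"
    using walk_append[of p "a#q" V E] False by simp
  have 2: "is_walk V E (p @ [a]) \<longleftrightarrow> is_walk V E p \<and> a \<in> V \<and> adj E (last p) a"
    using walk_append[of p "[a]" V E] False by (simp add: walk_single)
  show ?thesis unfolding 1 2 using walk_hd[of V E a q] by blast
qed

lemma walk_rev: "is_walk V E (rev p) \<longleftrightarrow> is_walk V E p"
proof (induction p)
  case Nil then show ?case by (simp add: is_walk_def)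
next
  case (Cons x p)
  show ?case
  proof (cases p)
    case Nil then show ?thesis by simp
  next
    case (Cons y p')
    have "is_walk V E (rev (x#p)) \<longleftrightarrow> is_walk V E (rev p) \<and> is_walk V E [x] \<and> adj E (last (rev p)) x"
      using walk_append[of "rev p" "[x]" V E] Cons by simp
    then show ?thesis using Cons \<open>is_walk V E (rev p) = is_walk V E p\<close>
      by (auto simp: walk_Cons2 walk_single adj_sym last_rev)
  qed
qed

lemma walk_butlast: "is_walk V E w \<Longrightarrow> length w \<ge> 2 \<Longrightarrow> is_walk V E (butlast w) \<and> adj E (last (butlast w)) (last w)"
proof -
  assume w: "is_walk V E w" "length w \<ge> 2"
  have ne: "butlast w \<noteq> []" using w(2) by (cases w) auto
  have eq: "w = butlast w @ [last w]" using w(2) by (cases w) auto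
  then show ?thesis using walk_append[of "butlast w" "[last w]" V E] ne w(1) by simp
qed

lemma odd_closed_walk:
  assumes g: "simple_graph V E"
  shows "is_walk V E w \<Longrightarrow> hd w = last w \<Longrightarrow> even (length w) \<Longrightarrow> \<exists>c. is_cycle V E c"
proof (induction w rule: length_induct)
  case (1 w)
  have w: "is_walk V E w" "hd w = last w" "even (length w)" using "1.prems" by auto
  have ne: "w \<noteq> []" using w(1) by (simp add: is_walk_def)
  then have "length w > 0" by simp
  then have len2: "length w \<ge> 2" using w(3) by presburger
  show ?case
  proof (cases "distinct (butlast w)")
    case True
    define c where "c = butlast w"
    have bw: "is_walk V E c" "adj E (last c) (last w)" using walk_butlast[OF w(1) len2] c_def by auto
    have cne: "c \<noteq> []" using len2 c_def by (cases w) auto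
    have hdc: "hd c = hd w" using len2 c_def by (cases w) auto
    have lc: "length c = length w - 1" using c_def by simp
    have "length c \<noteq> 1"
    proof
      assume "length c = 1"
      then obtain x where "c = [x]" by (cases c) auto
      then have "adj E x x" using bw hdc w(2) by simp
      then show False using adj_props[OF g] by blast
    qed
    then have "length c \<ge> 3" using lc w(3) len2 by presburger
    then have "is_cycle V E c" using True bw hdc w(2) c_def unfolding is_cycle_def by simp
    then show ?thesis by blast
  next
    case False
    then obtain xs a ys zs where d: "butlast w = xs @ [a] @ ys @ [a] @ zs"
      using not_distinct_decomp by blast
    define l where "l = last w"
    have weq: "w = xs @ a # (ys @ a # (zs @ [l]))"
    proof -
      have "w = butlast w @ [last w]" using ne by simp
      then show ?thesis using d l_def by simp
    qed
    have wa: "is_walk V E (xs @ [a])" "is_walk V E (a # ys @ [a])" "is_walk V E (a # zs @ [l])"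
      using w(1) weq walk_split[of V E xs a "ys @ a # (zs @ [l])"]
        walk_split[of V E "a # ys" a "zs @ [l]"] by auto
    define W1 where "W1 = a # ys @ [a]"
    define W2 where "W2 = xs @ a # (zs @ [l])"
    have W2w: "is_walk V E W2" using wa walk_split[of V E xs a "zs @ [l]"] W2_def by simp
    have W2c: "hd W2 = last W2"
    proof -
      have "hd W2 = hd w" using weq W2_def by (cases xs) auto
      then show ?thesis using W2_def l_def w(2) by simp
    qed
    have lw: "length w = length xs + length ys + length zs + 3" using weq by simp
    have "even (length W1) \<or> even (length W2)"
      using lw w(3) W1_def W2_def by auto
    moreover have "length W1 < length w" "length W2 < length w" using lw W1_def W2_def by auto
    moreover have "is_walk V E W1" "hd W1 = last W1" using wa(2) W1_def by auto
    ultimately show ?thesis using "1.IH" W2w W2c by blast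
  qed
qed

lemma tree_coloring:
  assumes t: "is_tree V E"
  shows "\<exists>col. \<forall>u v. adj E u v \<longrightarrow> col u \<noteq> (col v :: bool)"
proof -
  have g: "simple_graph V E" and conn: "connected_graph V E" and nc: "\<nexists>c. is_cycle V E c"
    and ne: "V \<noteq> {}"
    using t by (auto simp: is_tree_def)
  obtain r where r: "r \<in> V" using ne by blast
  define R where "R v n \<longleftrightarrow> (\<exists>p. is_walk V E p \<and> hd p = r \<and> last p = v \<and> length p = n)" for v n
  define d where "d v = (LEAST n. R v n)" for v
  have ex: "\<exists>n. R v n" if "v \<in> V" for v
    using conn r that unfolding connected_graph_def R_def by blast
  have Rd: "R v (d v)" if "v \<in> V" for v using ex[OF that] unfolding d_def by (rule LeastI_ex)
  have step: "d v \<le> d u + 1" if "adj E u v" for u v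
  proof -
    have uv: "u \<in> V" "v \<in> V" using adj_props[OF g that] by auto
    obtain p where p: "is_walk V E p" "hd p = r" "last p = u" "length p = d u"
      using Rd[OF uv(1)] R_def by blast
    have pne: "p \<noteq> []" using p(1) by (simp add: is_walk_def)
    have "is_walk V E (p @ [v])" using walk_append[of p "[v]" V E] pne p that uv by (simp add: walk_single)
    then have "R v (d u + 1)" unfolding R_def using p pne by (intro exI[of _ "p @ [v]"]) auto
    then show ?thesis unfolding d_def by (rule Least_le)
  qed
  have "\<forall>u v. adj E u v \<longrightarrow> even (d u) \<noteq> even (d v)"
  proof (intro allI impI notI)
    fix u v assume a: "adj E u v" and same: "even (d u) = even (d v)"
    have uv: "u \<in> V" "v \<in> V" using adj_props[OF g a] by auto
    have "d v \<le> d u + 1" "d u \<le> d v + 1" using step a adj_sym by metis+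
    then have deq: "d u = d v" using same by presburger
    obtain p where p: "is_walk V E p" "hd p = r" "last p = u" "length p = d u"
      using Rd[OF uv(1)] R_def by blast
    obtain q where q: "is_walk V E q" "hd q = r" "last q = v" "length q = d v"
      using Rd[OF uv(2)] R_def by blast
    have pne: "p \<noteq> []" using p(1) by (simp add: is_walk_def)
    have qne: "q \<noteq> []" using q(1) by (simp add: is_walk_def)
    have "is_walk V E (p @ rev q)"
      using walk_append[of p "rev q" V E] pne qne p q a walk_rev[of V E q] by (simp add: hd_rev)
    moreover have "hd (p @ rev q) = last (p @ rev q)" using pne qne p q by (simp add: last_rev)
    moreover have "even (length (p @ rev q))" using p q deq by simp
    ultimately show False using odd_closed_walk[OF g] nc by blast
  qed
  then show ?thesis by (intro exI[of _ "\<lambda>x. even (d x)"]) simp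
qed

definition indep :: "'a set \<Rightarrow> 'a set set \<Rightarrow> 'a set \<Rightarrow> bool" where
  "indep V E J \<longleftrightarrow> J \<subseteq> V \<and> (\<forall>u\<in>J. \<forall>v\<in>J. \<not> adj E u v)"

lemma indep_gamma:
  assumes g: "simple_graph V E" and J: "indep V E J"
  shows "card J \<le> upper_domination V E"
proof -
  have fV: "finite V" using g by (simp add: simple_graph_def)
  define F where "F = {M. indep V E M \<and> J \<subseteq> M}"
  have fF: "finite F" using fV unfolding F_def indep_def
    by (rule finite_subset[rotated, OF finite_Pow_iff[THEN iffD2]]) auto
  have "J \<in> F" using J F_def by simp
  then have neF: "card ` F \<noteq> {}" by blast
  obtain M where M: "M \<in> F" "card M = Max (card ` F)"
    using Max_in[OF finite_imageI[OF fF] neF] by auto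
  have Mmax: "card M' \<le> card M" if "M' \<in> F" for M'
    using M(2) fF that by simp
  have MV: "M \<subseteq> V" and Mi: "\<forall>u\<in>M. \<forall>v\<in>M. \<not> adj E u v" and JM: "J \<subseteq> M"
    using M(1) unfolding F_def indep_def by auto
  have fM: "finite M" using MV fV finite_subset by blast
  have dom: "dominating V E M"
    unfolding dominating_def
  proof (intro conjI MV ballI)
    fix v assume v: "v \<in> V"
    show "v \<in> M \<or> (\<exists>u\<in>M. adj E u v)"
    proof (rule ccontr)
      assume h: "\<not> (v \<in> M \<or> (\<exists>u\<in>M. adj E u v))"
      have nvv: "\<not> adj E v v" using adj_props(1)[OF g] by blast
      have "\<forall>u\<in>M. \<not> adj E v u" using h adj_sym[of E v] by blast
      then have "insert v M \<in> F" unfolding F_def indep_def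
        using h MV Mi JM v nvv by auto
      then have "card (insert v M) \<le> card M" by (rule Mmax)
      then show False using h fM by simp
    qed
  qed
  have md: "minimal_dominating V E M"
    unfolding minimal_dominating_def
  proof (intro conjI dom allI impI notI)
    fix S' assume s: "S' \<subset> M" and dS: "dominating V E S'"
    then obtain v where v: "v \<in> M" "v \<notin> S'" by blast
    then have "v \<in> V" using MV by blast
    then obtain u where "u \<in> S'" "adj E u v" using dS v unfolding dominating_def by blast
    then show False using Mi s v by blast
  qed
  have fin: "finite (card ` {S. minimal_dominating V E S})"
  proof -
    have "{S. minimal_dominating V E S} \<subseteq> Pow V"
      by (auto simp: minimal_dominating_def dominating_def)
    then show ?thesis using fV by (meson finite_Pow_iff finite_imageI finite_subset)
  qed
  have "card M \<le> upper_domination V E"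
    unfolding upper_domination_def using md fin by (intro Max_ge) auto
  moreover have "card J \<le> card M" using JM fM by (rule card_mono[rotated])
  ultimately show ?thesis by simp
qed

theorem lemma4p10:
  fixes V :: "'a set" and E :: "'a set set" and S :: "'a set"
  assumes "is_tree V E"
    and "dominating V E S"
  shows "int (card (essential_set V E S)) \<le> 2 * int (upper_domination V E) - int (card S)"
proof -
  have g: "simple_graph V E" using assms(1) by (simp add: is_tree_def)
  have fV: "finite V" using g by (simp add: simple_graph_def)
  have SV: "S \<subseteq> V" using assms(2) by (simp add: dominating_def)
  have fS: "finite S" using SV fV finite_subset by blast
  obtain col :: "'a \<Rightarrow> bool" where col: "\<And>u v. adj E u v \<Longrightarrow> col u \<noteq> col v"
    using tree_coloring[OF assms(1)] by blast
  define A where "A = essential_set V E S"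
  have AS: "A \<subseteq> S" by (auto simp: A_def essential_set_def)
  have exP: "\<exists>x. x \<in> V \<and> (x \<in> S \<longrightarrow> x = v) \<and> (\<forall>u\<in>S. u \<noteq> v \<longrightarrow> \<not> adj E u x)" if "v \<in> A" for v
  proof -
    have "\<not> dominating V E (S - {v})" using that by (simp add: A_def essential_set_def)
    then obtain x where "x \<in> V" "x \<notin> S - {v}" "\<forall>u\<in>S - {v}. \<not> adj E u x"
      using SV unfolding dominating_def by blast
    then show ?thesis by blast
  qed
  define p where "p v = (SOME x. x \<in> V \<and> (x \<in> S \<longrightarrow> x = v) \<and> (\<forall>u\<in>S. u \<noteq> v \<longrightarrow> \<not> adj E u x))" for v
  have pP: "p v \<in> V \<and> (p v \<in> S \<longrightarrow> p v = v) \<and> (\<forall>u\<in>S. u \<noteq> v \<longrightarrow> \<not> adj E u (p v))" if "v \<in> A" for v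
    unfolding p_def by (rule someI_ex[OF exP[OF that]])
  define A1 where "A1 = {v\<in>A. p v \<noteq> v}"
  define I0 where "I0 = {v\<in>A. p v = v}"
  have pnS: "p v \<notin> S" if "v \<in> A1" for v using pP that A1_def by auto
  have padj: "adj E v (p v)" if vA1: "v \<in> A1" for v
  proof -
    have v: "v \<in> A" "p v \<in> V" using vA1 pP A1_def by auto
    obtain u where "u \<in> S" "adj E u (p v)" using assms(2) v pnS[OF vA1] unfolding dominating_def by blast
    then show ?thesis using pP[OF v(1)] by (metis (no_types))
  qed
  have injp: "inj_on p A1"
  proof
    fix v w assume vw: "v \<in> A1" "w \<in> A1" "p v = p w"
    show "v = w"
    proof (rule ccontr)
      assume "v \<noteq> w"
      moreover have "adj E v (p w)" using padj[OF vw(1)] vw(3) by simp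
      moreover have "v \<in> S" "w \<in> A" using vw AS A1_def by auto
      ultimately show False using pP by blast
    qed
  qed
  define P where "P = p ` A1"
  have PS: "P \<inter> S = {}" using pnS P_def by auto
  have cP: "card P = card A1" using injp P_def card_image by blast
  have fA: "finite A" using AS fS finite_subset by blast
  have fA1: "finite A1" "finite I0" using fA A1_def I0_def by auto
  have cA: "card A = card A1 + card I0"
  proof -
    have "A = A1 \<union> I0" "A1 \<inter> I0 = {}" using A1_def I0_def by auto
    then show ?thesis using fA1 card_Un_disjoint by metis
  qed
  have I0S: "I0 \<subseteq> S" using AS I0_def by auto
  define Y where "Y = (S - I0) \<union> P"
  have fP: "finite P" using fA1 P_def by simp
  have cY: "card Y + card I0 = card S + card A1"
  proof -
    have "card Y = card (S - I0) + card P" unfolding Y_def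
      using PS fS fP by (intro card_Un_disjoint) auto
    moreover have "card (S - I0) + card I0 = card S"
      using card_Diff_subset[of I0 S] card_mono[OF fS I0S] finite_subset[OF I0S fS] I0S by simp
    ultimately show ?thesis using cP by simp
  qed
  have fY: "finite Y" using fS fP Y_def by simp
  define C where "C b = {y\<in>Y. col y = b}" for b
  have "card (C True) + card (C False) = card Y"
  proof -
    have "Y = C True \<union> C False" "C True \<inter> C False = {}" using C_def by auto
    moreover have "finite (C True)" "finite (C False)" using fY C_def by auto
    ultimately show ?thesis by (metis card_Un_disjoint)
  qed
  then obtain b where b: "card Y \<le> 2 * card (C b)"
    by (cases "card (C False) \<le> card (C True)") (auto intro: that[of True] that[of False])
  define J where "J = I0 \<union> C b"
  have PV: "P \<subseteq> V" using pP A1_def P_def by auto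
  have YV: "Y \<subseteq> V" using SV PV Y_def by auto
  have noadj: "\<not> adj E x y" if xy: "x \<in> J" "y \<in> J" for x y
  proof
    assume a: "adj E x y"
    have I0C: "\<not> adj E x y" if "x \<in> I0" "y \<in> J" for x y
    proof
      assume a: "adj E x y"
      have xA: "x \<in> A" "p x = x" "x \<in> S" using that I0_def AS by auto
      have "x \<noteq> y" using adj_props(1)[OF g a] .
      show False
      proof (cases "y \<in> S")
        case True
        then show False using pP[OF xA(1)] xA a adj_sym \<open>x \<noteq> y\<close> by metis
      next
        case False
        then have "y \<in> P" using that Y_def J_def C_def I0S by auto
        then obtain w where w: "w \<in> A1" "y = p w" using P_def by auto
        then have "w \<noteq> x" using xA A1_def by auto
        moreover have "w \<in> A" using w A1_def by auto
        ultimately show False using pP w xA a by metis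
      qed
    qed
    show False
    proof (cases "x \<in> I0 \<or> y \<in> I0")
      case True
      then show False using I0C a xy adj_sym by metis
    next
      case False
      then have "x \<in> C b" "y \<in> C b" using xy J_def by auto
      then show False using col[OF a] C_def by auto
    qed
  qed
  have Jind: "indep V E J" unfolding indep_def using noadj I0S SV YV J_def C_def by auto
  have cJ: "card J = card I0 + card (C b)"
  proof -
    have "I0 \<inter> C b = {}" using C_def Y_def PS I0S by auto
    moreover have "finite (C b)" using fY C_def by auto
    ultimately show ?thesis using J_def fA1 card_Un_disjoint by metis
  qed
  have "card J \<le> upper_domination V E" using indep_gamma[OF g Jind] .
  then have "card A + card S \<le> 2 * upper_domination V E" using cJ b cY cA by linarith
  then show ?thesis unfolding A_def by linarith
qed

end
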